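(* Let $\left(\mathbb{V}_{\mathbb{Z}},E,Q\right)$ be a polarized variation of Hodge structures of weight one and rank $2g$ over an open disk $B\subseteq\mathbb{C}$ with coordinate $t$, and write $\nabla^{GM}_t$ for the Gauß–Manin derivative in the direction $\partial/\partial t$. Let $\alpha\in\Gamma\left(B,E\right)$ be a holomorphic section. Then $$\alpha\in\Gamma\left(\mathcal{U}\right)\iff \alpha,\ \nabla^{GM}_t\alpha,\ \left(\nabla^{GM}_t\right)^2\alpha,\ \ldots,\ \left(\nabla^{GM}_t\right)^{g-1}\alpha\in\Gamma\left(\mathcal{K}\right),$$ equivalently $\alpha\in\Gamma(\mathcal{U})$ if and only if $\theta\left(\left(\nabla^{GM}_t\right)^j\alpha\right)=0$ for all $j=0,1,\ldots,g-1$.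
   Context: A PVHS of weight one and rank $2g$ on a complex manifold $B$ consists of: a local system $\mathbb{V}_{\mathbb{Z}}$ of free abelian groups of rank $2g$; a polarization $Q\colon\mathbb{V}_{\mathbb{Z}}\otimes\mathbb{V}_{\mathbb{Z}}\to\mathbb{Z}$ (non-degenerate, antisymmetric, unimodular); and a holomorphic subbundle $E\subseteq\mathcal{H}:=\mathbb{V}_{\mathbb{Z}}\otimes_{\mathbb{Z}}\mathcal{O}_B$ of rank $g$ on which the Hodge form $h(u,v)=iQ_{\mathbb{C}}(u,\overline{v})$ is positive definite. Then $E^{\perp}=\overline{E}$, $\mathcal{H}/E\cong E^{\vee}$ holomorphically, and there is a holomorphic exact sequence $0\to E\xrightarrow{\iota_1}\mathcal{H}\xrightarrow{\pi_2}E^{\vee}\to 0$ together with a $C^\infty$ orthogonal splitting $\mathcal{H}=E\oplus E^{\vee}$ given by smooth maps $\iota_2\colon E^\vee\to\mathcal{H}$, $\pi_1\colon\mathcal{H}\to E$ with $\pi_1\iota_1=\mathrm{id}$, $\pi_2\iota_2=\mathrm{id}$, $\iota_1\pi_1+\iota_2\pi_2=\mathrm{id}$. $\nabla^{GM}$ is the flat (Gauß–Manin) connection on $\mathcal{H}$ whose flat sections are $\mathbb{V}_{\mathbb{C}}=\mathbb{V}_{\mathbb{Z}}\otimes\mathbb{C}$. The Higgs field is $\theta:=\pi_2\circ\nabla^{GM}\circ\iota_1\colon E\to E^{\vee}\otimes\Omega^1_B$ (an $\mathcal{O}_B$-linear map). The flat unitary local system is $\mathbb{U}:=\ker\left(\nabla^{GM}\circ\iota_1\right)\subseteq\mathbb{V}_{\mathbb{C}}$,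 the flat unitary subbundle is $\mathcal{U}:=\mathbb{U}\otimes_{\mathbb{C}}\mathcal{O}_B\subseteq E$, and the kernel sheaf is $\mathcal{K}:=\ker\theta\subseteq E$. *)

theory Defs
  imports "HOL-Analysis.Analysis"
begin

text \<open>Over an open disk B the local system V_Z is trivial: V_Z = Z^(2g) (index type 'n with
  CARD('n) = 2g), the polarization is a constant integer matrix Q, the bundle H is the trivial
  bundle B x C^(2g), and the Gauss-Manin derivative in direction d/dt is componentwise d/dt.\<close>

definition nablat :: "(complex \<Rightarrow> complex^'n) \<Rightarrow> complex \<Rightarrow> complex^'n" where
  "nablat \<alpha> = (\<lambda>t. \<chi> i. deriv (\<lambda>s. \<alpha> s $ i) t)"

definition Qc :: "int^'n^'n \<Rightarrow> complex^'n \<Rightarrow> complex^'n \<Rightarrow> complex" where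
  "Qc Q u v = (\<Sum>i\<in>UNIV. \<Sum>j\<in>UNIV. u $ i * of_int (Q $ i $ j) * v $ j)"

definition hodge :: "int^'n^'n \<Rightarrow> complex^'n \<Rightarrow> complex^'n \<Rightarrow> complex" where
  "hodge Q u v = \<i> * Qc Q u (\<chi> i. cnj (v $ i))"

definition vec_holomorphic :: "complex set \<Rightarrow> (complex \<Rightarrow> complex^'n) \<Rightarrow> bool" where
  "vec_holomorphic W \<alpha> = (\<forall>i. (\<lambda>t. \<alpha> t $ i) holomorphic_on W)"

definition holo_subbundle :: "complex set \<Rightarrow> nat \<Rightarrow> (complex \<Rightarrow> (complex^'n) set) \<Rightarrow> bool" where
  "holo_subbundle B g E =
     ((\<forall>t\<in>B. vec.subspace (E t) \<and> vec.dim (E t) = g) \<and>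
      (\<forall>t0\<in>B. \<exists>W e. open W \<and> t0 \<in> W \<and> W \<subseteq> B \<and> (\<forall>k<g. vec_holomorphic W (e k)) \<and>
                     (\<forall>t\<in>W. E t = vec.span {e k t | k. k < g})))"

definition pvhs_wt1 :: "complex set \<Rightarrow> nat \<Rightarrow> int^'n^'n \<Rightarrow> (complex \<Rightarrow> (complex^'n) set) \<Rightarrow> bool" where
  "pvhs_wt1 B g Q E =
     (open B \<and> CARD('n) = 2 * g \<and>
      transpose Q = - Q \<and> (det Q = 1 \<or> det Q = -1) \<and>
      holo_subbundle B g E \<and>
      (\<forall>t\<in>B. \<forall>u\<in>E t. \<forall>v\<in>E t. Qc Q u v = 0) \<and>
      (\<forall>t\<in>B. \<forall>u\<in>E t. u \<noteq> 0 \<longrightarrow> Im (hodge Q u u) = 0 \<and> Re (hodge Q u u) > 0))"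

definition hol_section :: "complex set \<Rightarrow> (complex \<Rightarrow> (complex^'n) set) \<Rightarrow> (complex \<Rightarrow> complex^'n) \<Rightarrow> bool" where
  "hol_section B E \<alpha> = (vec_holomorphic B \<alpha> \<and> (\<forall>t\<in>B. \<alpha> t \<in> E t))"

text \<open>Higgs field theta = pi_2 o nabla o iota_1 with pi_2 : H \<rightarrow> H/E (= E dual); the value at t
  is the class of nabla_t beta (t) modulo E t; the zero class is E t itself.\<close>
definition higgs :: "(complex \<Rightarrow> (complex^'n) set) \<Rightarrow> (complex \<Rightarrow> complex^'n) \<Rightarrow> complex \<Rightarrow> (complex^'n) set" where
  "higgs E \<beta> t = {nablat \<beta> t + w | w. w \<in> E t}"

definition Gamma_K :: "complex set \<Rightarrow> (complex \<Rightarrow> (complex^'n) set) \<Rightarrow> (complex \<Rightarrow> complex^'n) \<Rightarrow> bool" where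
  "Gamma_K B E \<beta> = (hol_section B E \<beta> \<and> (\<forall>t\<in>B. higgs E \<beta> t = E t))"

text \<open>Flat unitary local system U = ker(nabla o iota_1) in V_C: over the disk, flat sections of
  V_C are constant vectors; those lying in E.\<close>
definition unitary_flat :: "complex set \<Rightarrow> (complex \<Rightarrow> (complex^'n) set) \<Rightarrow> (complex^'n) set" where
  "unitary_flat B E = {v. \<forall>t\<in>B. v \<in> E t}"

definition Gamma_U :: "complex set \<Rightarrow> (complex \<Rightarrow> (complex^'n) set) \<Rightarrow> (complex \<Rightarrow> complex^'n) \<Rightarrow> bool" where
  "Gamma_U B E \<alpha> = (\<exists>(k::nat) u f. (\<forall>i<k. u i \<in> unitary_flat B E \<and> f i holomorphic_on B) \<and>
                        (\<forall>t\<in>B. \<alpha> t = (\<Sum>i<k. f i t *s u i)))"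

end

theory Submission
  imports Defs "HOL-Complex_Analysis.Complex_Analysis"
begin

no_notation fps_nth (infixl \<open>$\<close> 75)



definition cindep :: "nat \<Rightarrow> (nat \<Rightarrow> complex^'n) \<Rightarrow> bool" where
  "cindep k u \<longleftrightarrow> (\<forall>a. (\<Sum>i<k. a i *s u i) = 0 \<longrightarrow> (\<forall>i<k. a i = 0))"

definition cspan :: "nat \<Rightarrow> (nat \<Rightarrow> complex^'n) \<Rightarrow> complex^'n \<Rightarrow> bool" where
  "cspan k u x \<longleftrightarrow> (\<exists>a. x = (\<Sum>i<k. a i *s u i))"

lemma nablat_local:
  assumes "open W" "t \<in> W" "\<forall>s\<in>W. \<beta> s = \<gamma> s"
  shows "nablat \<beta> t = nablat \<gamma> t"
proof -
  have ev: "eventually (\<lambda>s. s \<in> W) (nhds t)" using assms eventually_nhds_in_open by blast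
  have "\<And>i. deriv (\<lambda>s. \<beta> s $ i) t = deriv (\<lambda>s. \<gamma> s $ i) t"
    by (rule deriv_cong_ev[OF eventually_mono[OF ev]]) (use assms in auto)
  then show ?thesis unfolding nablat_def by simp
qed

lemma vec_holomorphic_nablat:
  "vec_holomorphic W \<beta> \<Longrightarrow> open W \<Longrightarrow> vec_holomorphic W (nablat \<beta>)"
  unfolding vec_holomorphic_def nablat_def by (simp add: holomorphic_deriv)

lemma vec_holomorphic_funpow:
  "vec_holomorphic W \<beta> \<Longrightarrow> open W \<Longrightarrow> vec_holomorphic W ((nablat^^n) \<beta>)"
  by (induction n) (auto intro: vec_holomorphic_nablat)

lemma nablat_sum:
  assumes W: "open W" "t \<in> W" and c: "\<forall>i<k. c i holomorphic_on W"
    and v: "\<forall>i<k. vec_holomorphic W (v i)"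
    and eq: "\<forall>s\<in>W. \<beta> s = (\<Sum>i<k. c i s *s v i s)"
  shows "nablat \<beta> t = (\<Sum>i<k. deriv (c i) t *s v i t + c i t *s nablat (v i) t)"
proof -
  have "nablat \<beta> t = nablat (\<lambda>s. \<Sum>i<k. c i s *s v i s) t"
    using eq by (intro nablat_local[OF W]) auto
  also have "\<dots> = (\<Sum>i<k. deriv (c i) t *s v i t + c i t *s nablat (v i) t)"
    unfolding vec_eq_iff
  proof
    fix m
    have "((\<lambda>s. \<Sum>i<k. c i s * v i s $ m) has_field_derivative
          (\<Sum>i<k. deriv (c i) t * v i t $ m + c i t * deriv (\<lambda>s. v i s $ m) t)) (at t)"
    proof (rule DERIV_sum[where S="{..<k}" and f="\<lambda>s i. c i s * v i s $ m" and
          f'="\<lambda>i. deriv (c i) t * v i t $ m + c i t * deriv (\<lambda>s. v i s $ m) t"])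
      fix i assume "i \<in> {..<k}"
      then have h1: "c i holomorphic_on W" and h2: "(\<lambda>s. v i s $ m) holomorphic_on W"
        using c v by (auto simp: vec_holomorphic_def)
      have d1: "(c i has_field_derivative deriv (c i) t) (at t)"
        using holomorphic_derivI[OF h1 W] by simp
      have d2: "((\<lambda>s. v i s $ m) has_field_derivative deriv (\<lambda>s. v i s $ m) t) (at t)"
        using holomorphic_derivI[OF h2 W] by simp
      show "((\<lambda>s. c i s * v i s $ m) has_field_derivative
          deriv (c i) t * v i t $ m + c i t * deriv (\<lambda>s. v i s $ m) t) (at t)"
        by (rule DERIV_cong[OF DERIV_mult[OF d1 d2]]) (simp add: algebra_simps)
    qed
    then have D: "deriv (\<lambda>s. \<Sum>i<k. c i s * v i s $ m) t =
          (\<Sum>i<k. deriv (c i) t * v i t $ m + c i t * deriv (\<lambda>s. v i s $ m) t)"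
      by (rule DERIV_imp_deriv)
    have E: "(\<lambda>s. (\<Sum>i<k. c i s *s v i s) $ m) = (\<lambda>s. \<Sum>i<k. c i s * v i s $ m)"
      by (simp only: sum_component vector_smult_component)
    show "nablat (\<lambda>s. \<Sum>i<k. c i s *s v i s) t $ m =
        (\<Sum>i<k. deriv (c i) t *s v i t + c i t *s nablat (v i) t) $ m"
      unfolding nablat_def vec_lambda_beta E D
      by (simp only: sum_component vector_add_component vector_smult_component vec_lambda_beta)
  qed
  finally show ?thesis .
qed



lemma cspan_in_subspace:
  assumes "vec.subspace S" "\<forall>i<k. u i \<in> S" "cspan k u x" shows "x \<in> S"
proof -
  obtain a where x: "x = (\<Sum>i<k. a i *s u i)" using assms(3) unfolding cspan_def by blast
  show ?thesis unfolding x
    by (rule vec.subspace_sum[OF assms(1)]) (use assms in \<open>auto intro: vec.subspace_scale\<close>)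
qed

lemma cindep_inj:
  assumes "cindep m u" shows "inj_on u {..<m}"
proof (rule inj_onI, rule ccontr)
  fix i j assume ij: "i \<in> {..<m}" "j \<in> {..<m}" "u i = u j" "i \<noteq> j"
  define a where "a = (\<lambda>l. if l = i then (1::complex) else if l = j then -1 else 0)"
  have "(\<Sum>l<m. a l *s u l) = (\<Sum>l\<in>{i,j}. a l *s u l)"
    by (rule sum.mono_neutral_right) (use ij in \<open>auto simp: a_def\<close>)
  also have "\<dots> = 0" using ij by (simp add: a_def)
  finally have "a i = 0" using assms ij unfolding cindep_def by blast
  then show False by (simp add: a_def)
qed

lemma cindep_independent:
  assumes "cindep m u" shows "vec.independent (u ` {..<m})"
  unfolding vec.independent_explicit
proof (intro conjI allI impI ballI)
  show "finite (u ` {..<m})" by simp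
  fix c v assume s: "(\<Sum>v\<in>u ` {..<m}. c v *s v) = 0" and v: "v \<in> u ` {..<m}"
  have "(\<Sum>v\<in>u ` {..<m}. c v *s v) = (\<Sum>i<m. c (u i) *s u i)"
    by (rule sum.reindex[OF cindep_inj[OF assms], unfolded comp_def])
  with s have "\<forall>i<m. c (u i) = 0" using assms unfolding cindep_def by auto
  with v show "c v = 0" by auto
qed

lemma cindep_le_dim:
  assumes "\<forall>i<m. u i \<in> S" "cindep m u" shows "m \<le> vec.dim S"
proof -
  have "card (u ` {..<m}) \<le> vec.dim S"
    by (rule vec.independent_card_le_dim) (use assms cindep_independent in auto)
  moreover have "card (u ` {..<m}) = m"
    using card_image[OF cindep_inj[OF assms(2)]] by simp
  ultimately show ?thesis by simp
qed

lemma cspan_subspace: "vec.subspace {x. cspan k u x}"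
proof (rule vec.subspaceI)
  show "0 \<in> {x. cspan k u x}" unfolding cspan_def
    by (auto intro!: exI[of _ "\<lambda>i. 0"])
next
  fix x y assume "x \<in> {x. cspan k u x}" "y \<in> {x. cspan k u x}"
  then obtain a b where "x = (\<Sum>i<k. a i *s u i)" "y = (\<Sum>i<k. b i *s u i)"
    unfolding cspan_def by auto
  then have e: "x + y = (\<Sum>i<k. (a i + b i) *s u i)"
    by (simp add: vec_eq_iff sum.distrib distrib_right)
  show "x + y \<in> {x. cspan k u x}" unfolding cspan_def mem_Collect_eq
    by (rule exI[of _ "\<lambda>i. a i + b i"]) (rule e)
next
  fix c x assume "x \<in> {x. cspan k u x}"
  then obtain a where "x = (\<Sum>i<k. a i *s u i)" unfolding cspan_def by auto
  then have e: "c *s x = (\<Sum>i<k. (c * a i) *s u i)"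
    by (simp add: vec_eq_iff sum_distrib_left mult.assoc)
  show "c *s x \<in> {x. cspan k u x}" unfolding cspan_def mem_Collect_eq
    by (rule exI[of _ "\<lambda>i. c * a i"]) (rule e)
qed

lemma span_cspan: "x \<in> vec.span (u ` {..<k}) \<longleftrightarrow> cspan k u x"
proof
  assume "x \<in> vec.span (u ` {..<k})"
  moreover have "vec.span (u ` {..<k}) \<subseteq> {x. cspan k u x}"
  proof (rule vec.span_minimal[OF _ cspan_subspace])
    show "u ` {..<k} \<subseteq> {x. cspan k u x}"
    proof
      fix y assume "y \<in> u ` {..<k}"
      then obtain j where j: "j < k" "y = u j" by auto
      have "(\<Sum>i<k. (if i = j then 1 else 0) *s u i) = (\<Sum>i\<in>{j}. (if i = j then 1 else 0) *s u i)"
        by (rule sum.mono_neutral_right) (use j in auto)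
      then have e: "y = (\<Sum>i<k. (if i = j then 1 else 0) *s u i)" using j by simp
      show "y \<in> {x. cspan k u x}" unfolding cspan_def mem_Collect_eq
        by (rule exI[of _ "\<lambda>i. if i = j then 1 else 0"]) (rule e)
    qed
  qed
  ultimately show "cspan k u x" by auto
next
  assume "cspan k u x"
  then obtain a where x: "x = (\<Sum>i<k. a i *s u i)" unfolding cspan_def by auto
  show "x \<in> vec.span (u ` {..<k})" unfolding x
    by (intro vec.span_sum vec.span_scale vec.span_base) auto
qed

lemma cindep_from_dim:
  assumes "vec.dim (vec.span (u ` {..<g})) = g" shows "cindep g u"
proof (rule ccontr)
  assume "\<not> cindep g u"
  then obtain a j where s: "(\<Sum>i<g. a i *s u i) = 0" and j: "j < g" "a j \<noteq> 0"
    unfolding cindep_def by blast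
  let ?R = "u ` ({..<g} - {j})"
  have "(\<Sum>i<g. a i *s u i) = a j *s u j + (\<Sum>i\<in>{..<g} - {j}. a i *s u i)"
    by (rule sum.remove) (use j in auto)
  with s have "a j *s u j = - (\<Sum>i\<in>{..<g} - {j}. a i *s u i)"
    by (simp add: eq_neg_iff_add_eq_0)
  then have "u j = (- 1 / a j) *s (\<Sum>i\<in>{..<g} - {j}. a i *s u i)"
    using j by (simp add: vec_eq_iff field_simps)
  also have "\<dots> \<in> vec.span ?R"
    by (intro vec.span_scale vec.span_sum vec.span_base) auto
  finally have uj: "u j \<in> vec.span ?R" .
  have "u ` {..<g} \<subseteq> vec.span ?R"
  proof
    fix y assume "y \<in> u ` {..<g}"
    then obtain i where "i < g" "y = u i" by auto
    then show "y \<in> vec.span ?R"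
      using uj by (cases "i = j") (auto intro: vec.span_base)
  qed
  then have "vec.span (u ` {..<g}) \<subseteq> vec.span ?R"
    using vec.span_minimal vec.subspace_span by blast
  then have "vec.dim (vec.span (u ` {..<g})) \<le> card ?R"
    by (intro vec.dim_le_card) auto
  also have "card ?R \<le> card ({..<g} - {j})" by (rule card_image_le) auto
  also have "\<dots> = g - 1" using j by simp
  finally show False using assms j by linarith
qed

lemma cindep_Suc_dep:
  assumes "cindep k u" "\<not> cindep (Suc k) u" shows "cspan k u (u k)"
proof -
  obtain a where s: "(\<Sum>i<Suc k. a i *s u i) = 0" and nz: "\<exists>i<Suc k. a i \<noteq> 0"
    using assms(2) unfolding cindep_def by auto
  have s': "(\<Sum>i<k. a i *s u i) + a k *s u k = 0" using s by simp
  have ak: "a k \<noteq> 0"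
  proof
    assume "a k = 0"
    then have "(\<Sum>i<k. a i *s u i) = 0" using s' by simp
    then have "\<forall>i<k. a i = 0" using assms(1) unfolding cindep_def by blast
    with \<open>a k = 0\<close> nz show False using less_Suc_eq by auto
  qed
  have "u k = (\<Sum>i<k. (- a i / a k) *s u i)"
  proof -
    have "a k *s u k = - (\<Sum>i<k. a i *s u i)" using s' by (simp add: eq_neg_iff_add_eq_0 add.commute)
    then have "u k = (- 1 / a k) *s (\<Sum>i<k. a i *s u i)" using ak
      by (simp add: vec_eq_iff field_simps)
    also have "\<dots> = (\<Sum>i<k. (- a i / a k) *s u i)"
      by (simp add: vec_eq_iff sum_distrib_left sum_negf)
    finally show ?thesis .
  qed
  then show ?thesis unfolding cspan_def by (rule exI[of _ "\<lambda>i. - a i / a k"])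
qed

lemma cindep_SucI:
  assumes "cindep k u" "\<not> cspan k u (u k)" shows "cindep (Suc k) u"
  unfolding cindep_def
proof (rule allI, rule impI)
  fix a assume s: "(\<Sum>i<Suc k. a i *s u i) = 0"
  then have s': "(\<Sum>i<k. a i *s u i) + a k *s u k = 0" by simp
  have ak: "a k = 0"
  proof (rule ccontr)
    assume ak: "a k \<noteq> 0"
    have "a k *s u k = - (\<Sum>i<k. a i *s u i)" using s' by (simp add: eq_neg_iff_add_eq_0 add.commute)
    then have "u k = (- 1 / a k) *s (\<Sum>i<k. a i *s u i)" using ak
      by (simp add: vec_eq_iff field_simps)
    also have "\<dots> = (\<Sum>i<k. (- a i / a k) *s u i)"
      by (simp add: vec_eq_iff sum_distrib_left sum_negf)
    finally have "cspan k u (u k)" unfolding cspan_def by (rule exI[of _ "\<lambda>i. - a i / a k"])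
    then show False using assms(2) by blast
  qed
  then have "\<forall>i<k. a i = 0" using s' assms(1) unfolding cindep_def by simp
  with ak show "\<forall>i<Suc k. a i = 0" using less_Suc_eq by auto
qed



lemma proj_sum:
  fixes a :: "nat \<Rightarrow> complex" and v :: "nat \<Rightarrow> complex^'n"
  shows "(\<Sum>i<k. a i *s (v i - (v i $ m / p $ m) *s p)) =
         (\<Sum>i<k. a i *s v i) - ((\<Sum>i<k. a i * v i $ m) / p $ m) *s p"
  by (simp add: vec_eq_iff right_diff_distrib sum_subtractf sum_distrib_right sum_divide_distrib
        mult.assoc)

lemma lin_aux: "(xj::complex) - q1 * z = A - q2 * z \<Longrightarrow> A + (q1 - q2) * z = xj"
  by (simp add: algebra_simps)

lemma LI:
  fixes v :: "nat \<Rightarrow> complex \<Rightarrow> complex^'n"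
  assumes "open W" "t1 \<in> W" "\<forall>i<k. vec_holomorphic W (v i)" "cindep k (\<lambda>i. v i t1)"
  shows "\<exists>W'. open W' \<and> t1 \<in> W' \<and> W' \<subseteq> W \<and> (\<forall>t\<in>W'. cindep k (\<lambda>i. v i t)) \<and>
     (\<forall>x. vec_holomorphic W x \<longrightarrow> (\<forall>t\<in>W'. cspan k (\<lambda>i. v i t) (x t)) \<longrightarrow>
        (\<exists>c. (\<forall>i<k. c i holomorphic_on W') \<and> (\<forall>t\<in>W'. x t = (\<Sum>i<k. c i t *s v i t))))"
  using assms
proof (induction k arbitrary: W v)
  case 0
  show ?case
  proof (intro exI[of _ W] conjI ballI allI impI)
    fix x :: "complex \<Rightarrow> complex^'n" assume "\<forall>t\<in>W. cspan 0 (\<lambda>i. v i t) (x t)"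
    then have "\<forall>t\<in>W. x t = 0" unfolding cspan_def by simp
    then show "\<exists>c. (\<forall>i<0. c i holomorphic_on W) \<and> (\<forall>t\<in>W. x t = (\<Sum>i<0. c i t *s v i t))"
      by simp
  qed (use 0 in \<open>auto simp: cindep_def\<close>)
next
  case (Suc k)
  note W = Suc.prems(1,2) and hol = Suc.prems(3) and ind = Suc.prems(4)
  have vk0: "v k t1 \<noteq> 0"
  proof
    assume z: "v k t1 = 0"
    have "(\<Sum>i<Suc k. (if i = k then 1 else 0) *s v i t1) = 0" using z by simp
    from ind[unfolded cindep_def, rule_format, OF this, of k] show False by simp
  qed
  then obtain m where m: "v k t1 $ m \<noteq> 0" by (auto simp: vec_eq_iff)
  have holk: "vec_holomorphic W (v k)" using hol by simp
  then have contk: "continuous_on W (\<lambda>t. v k t $ m)"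
    unfolding vec_holomorphic_def using holomorphic_on_imp_continuous_on by blast
  define W2 where "W2 = W \<inter> (\<lambda>t. v k t $ m) -` (- {0})"
  have W2: "open W2" "t1 \<in> W2" "W2 \<subseteq> W"
    unfolding W2_def using continuous_open_preimage[OF contk W(1), of "-{0}"] W m by auto
  have nz: "\<And>t. t \<in> W2 \<Longrightarrow> v k t $ m \<noteq> 0" unfolding W2_def by auto
  define w where "w = (\<lambda>i t. v i t - (v i t $ m / v k t $ m) *s v k t)"
  have holw: "\<forall>i<k. vec_holomorphic W2 (w i)"
  proof (intro allI impI)
    fix i assume "i < k"
    then have hi: "vec_holomorphic W (v i)" using hol by simp
    show "vec_holomorphic W2 (w i)" unfolding vec_holomorphic_def w_def
    proof
      fix j
      have a: "(\<lambda>t. v i t $ j) holomorphic_on W2" "(\<lambda>t. v i t $ m) holomorphic_on W2"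
        "(\<lambda>t. v k t $ j) holomorphic_on W2" "(\<lambda>t. v k t $ m) holomorphic_on W2"
        using hi holk W2(3) unfolding vec_holomorphic_def by (auto intro: holomorphic_on_subset)
      show "(\<lambda>t. (v i t - (v i t $ m / v k t $ m) *s v k t) $ j) holomorphic_on W2"
        using a nz by (auto intro!: holomorphic_intros)
    qed
  qed
  have indw: "cindep k (\<lambda>i. w i t1)"
    unfolding cindep_def
  proof (rule allI, rule impI)
    fix a assume s: "(\<Sum>i<k. a i *s w i t1) = 0"
    define b where "b = (\<lambda>i. if i = k then - ((\<Sum>i<k. a i * v i t1 $ m) / v k t1 $ m) else a i)"
    have "(\<Sum>i<Suc k. b i *s v i t1) = (\<Sum>i<k. a i *s w i t1)"
      unfolding w_def proj_sum by (simp add: b_def)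
    then have "\<forall>i<Suc k. b i = 0" using s ind unfolding cindep_def by simp
    then show "\<forall>i<k. a i = 0"
    proof (intro allI impI)
      fix i assume "\<forall>i<Suc k. b i = 0" "i < k"
      then have "b i = 0" by simp
      then show "a i = 0" using \<open>i < k\<close> by (simp add: b_def)
    qed
  qed
  obtain W' where W': "open W'" "t1 \<in> W'" "W' \<subseteq> W2"
    and indW': "\<forall>t\<in>W'. cindep k (\<lambda>i. w i t)"
    and coW': "\<forall>x. vec_holomorphic W2 x \<longrightarrow> (\<forall>t\<in>W'. cspan k (\<lambda>i. w i t) (x t)) \<longrightarrow>
        (\<exists>c. (\<forall>i<k. c i holomorphic_on W') \<and> (\<forall>t\<in>W'. x t = (\<Sum>i<k. c i t *s w i t)))"
    using Suc.IH[OF W2(1,2) holw indw] by blast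
  show ?case
  proof (intro exI[of _ W'] conjI ballI allI impI)
    show "open W'" "t1 \<in> W'" "W' \<subseteq> W" using W' W2 by auto
  next
    fix t assume t: "t \<in> W'"
    then have nzt: "v k t $ m \<noteq> 0" using W' nz by auto
    show "cindep (Suc k) (\<lambda>i. v i t)" unfolding cindep_def
    proof (rule allI, rule impI)
      fix a assume s: "(\<Sum>i<Suc k. a i *s v i t) = 0"
      then have s': "(\<Sum>i<k. a i *s v i t) = - (a k *s v k t)"
        by (simp add: eq_neg_iff_add_eq_0)
      have "(\<Sum>i<k. a i * v i t $ m) = - (a k * v k t $ m)"
        using arg_cong[OF s', of "\<lambda>x. x $ m"] by simp
      then have "(\<Sum>i<k. a i *s w i t) = 0"
        unfolding w_def proj_sum s' using nzt by (simp add: vec_eq_iff field_simps)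
      then have ak: "\<forall>i<k. a i = 0" using indW' t unfolding cindep_def by blast
      then have "a k *s v k t = 0" using s by simp
      then have "a k * v k t $ m = 0" by (metis vector_smult_component zero_index)
      then have "a k = 0" using nzt by simp
      with ak show "\<forall>i<Suc k. a i = 0" using less_Suc_eq by auto
    qed
  next
    fix x :: "complex \<Rightarrow> complex^'n"
    assume hx: "vec_holomorphic W x" and sx: "\<forall>t\<in>W'. cspan (Suc k) (\<lambda>i. v i t) (x t)"
    define y where "y = (\<lambda>t. x t - (x t $ m / v k t $ m) *s v k t)"
    have hy: "vec_holomorphic W2 y" unfolding vec_holomorphic_def y_def
    proof
      fix j
      have a: "(\<lambda>t. x t $ j) holomorphic_on W2" "(\<lambda>t. x t $ m) holomorphic_on W2"
        "(\<lambda>t. v k t $ j) holomorphic_on W2" "(\<lambda>t. v k t $ m) holomorphic_on W2"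
        using hx holk W2(3) unfolding vec_holomorphic_def by (auto intro: holomorphic_on_subset)
      show "(\<lambda>t. (x t - (x t $ m / v k t $ m) *s v k t) $ j) holomorphic_on W2"
        using a nz by (auto intro!: holomorphic_intros)
    qed
    have sy: "\<forall>t\<in>W'. cspan k (\<lambda>i. w i t) (y t)"
    proof
      fix t assume t: "t \<in> W'"
      then have nzt: "v k t $ m \<noteq> 0" using W' nz by auto
      obtain a where a: "x t = (\<Sum>i<Suc k. a i *s v i t)" using sx t unfolding cspan_def by blast
      have "y t = (\<Sum>i<k. a i *s w i t)"
        unfolding w_def proj_sum y_def a using nzt
        by (simp add: vec_eq_iff field_simps)
      then show "cspan k (\<lambda>i. w i t) (y t)" unfolding cspan_def by (rule exI[of _ a])
    qed
    obtain c where c: "\<forall>i<k. c i holomorphic_on W'" and cy: "\<forall>t\<in>W'. y t = (\<Sum>i<k. c i t *s w i t)"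
      using coW' hy sy by blast
    define c' where "c' = (\<lambda>i. if i = k then (\<lambda>t. (x t $ m - (\<Sum>i<k. c i t * v i t $ m)) / v k t $ m) else c i)"
    show "\<exists>c. (\<forall>i<Suc k. c i holomorphic_on W') \<and> (\<forall>t\<in>W'. x t = (\<Sum>i<Suc k. c i t *s v i t))"
    proof (intro exI[of _ c'] conjI allI impI ballI)
      fix i assume i: "i < Suc k"
      show "c' i holomorphic_on W'"
      proof (cases "i = k")
        case True
        have a: "(\<lambda>t. x t $ m) holomorphic_on W'" "(\<lambda>t. v k t $ m) holomorphic_on W'"
          "\<And>i. i < k \<Longrightarrow> (\<lambda>t. v i t $ m) holomorphic_on W'"
        proof -
          have sub: "W' \<subseteq> W" using W'(3) W2(3) by blast
          show "(\<lambda>t. x t $ m) holomorphic_on W'"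
            using hx sub unfolding vec_holomorphic_def by (blast intro: holomorphic_on_subset)
          show "(\<lambda>t. v k t $ m) holomorphic_on W'"
            using holk sub unfolding vec_holomorphic_def by (blast intro: holomorphic_on_subset)
          fix i assume "i < k"
          then have "vec_holomorphic W (v i)" using hol by simp
          then show "(\<lambda>t. v i t $ m) holomorphic_on W'"
            using sub unfolding vec_holomorphic_def by (blast intro: holomorphic_on_subset)
        qed
        have "(\<lambda>t. (x t $ m - (\<Sum>i<k. c i t * v i t $ m)) / v k t $ m) holomorphic_on W'"
          using a c nz W'(3) by (auto intro!: holomorphic_intros)
        then show ?thesis using True by (simp add: c'_def)
      next
        case False
        then show ?thesis using c i by (simp add: c'_def)
      qed
    next
      fix t assume t: "t \<in> W'"
      then have nzt: "v k t $ m \<noteq> 0" using W' nz by auto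
      have e: "x t - (x t $ m / v k t $ m) *s v k t =
          (\<Sum>i<k. c i t *s v i t) - ((\<Sum>i<k. c i t * v i t $ m) / v k t $ m) *s v k t"
      proof -
        have "y t = (\<Sum>i<k. c i t *s w i t)" using cy t by blast
        then show ?thesis unfolding y_def w_def proj_sum .
      qed
      have "(\<Sum>i<Suc k. c' i t *s v i t) = (\<Sum>i<k. c i t *s v i t) +
          ((x t $ m - (\<Sum>i<k. c i t * v i t $ m)) / v k t $ m) *s v k t"
        by (simp add: c'_def)
      also have "\<dots> = x t"
      proof (subst vec_eq_iff, rule allI)
        fix j
        have ej: "x t $ j - (x t $ m / v k t $ m) * v k t $ j =
            (\<Sum>i<k. c i t * v i t $ j) - ((\<Sum>i<k. c i t * v i t $ m) / v k t $ m) * v k t $ j"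
          using arg_cong[OF e, of "\<lambda>z. z $ j"] by simp
        show "((\<Sum>i<k. c i t *s v i t) +
          ((x t $ m - (\<Sum>i<k. c i t * v i t $ m)) / v k t $ m) *s v k t) $ j = x t $ j"
          unfolding vector_add_component sum_component vector_smult_component diff_divide_distrib
          by (rule lin_aux[OF ej[unfolded diff_divide_distrib]])
      qed
      finally show "x t = (\<Sum>i<Suc k. c' i t *s v i t)" by simp
    qed
  qed
qed



lemma sum_ind_vec:
  fixes u :: "nat \<Rightarrow> complex^'n"
  assumes j: "j < k" shows "(\<Sum>l<k. (if l = j then 1 else 0) *s u l) = u j"
proof -
  have "(\<Sum>l<k. (if l = j then 1 else 0) *s u l) = (\<Sum>l\<in>{j}. (if l = j then 1 else 0) *s u l)"
    using j by (intro sum.mono_neutral_right) auto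
  then show ?thesis by simp
qed

lemma cindep_cspan_False:
  assumes "cindep (Suc k) u" "cspan k u (u k)" shows False
proof -
  obtain a where a: "u k = (\<Sum>i<k. a i *s u i)" using assms(2) unfolding cspan_def by blast
  define b where "b = (\<lambda>i. if i = k then -1 else a i)"
  have "(\<Sum>i<Suc k. b i *s u i) = 0" using a by (simp add: b_def)
  from assms(1)[unfolded cindep_def, rule_format, OF this, of k] show False by (simp add: b_def)
qed

lemma cindep_cong: assumes "\<And>i. i < k \<Longrightarrow> u i = w i" shows "cindep k u = cindep k w"
proof -
  have "\<And>a. (\<Sum>i<k. a i *s u i) = (\<Sum>i<k. a i *s w i)" using assms by (intro sum.cong) auto
  then show ?thesis unfolding cindep_def by simp
qed

lemma cspan_cong: assumes "\<And>i. i < k \<Longrightarrow> u i = w i" shows "cspan k u x = cspan k w x"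
proof -
  have "\<And>a. (\<Sum>i<k. a i *s u i) = (\<Sum>i<k. a i *s w i)" using assms by (intro sum.cong) auto
  then show ?thesis unfolding cspan_def by simp
qed

lemma coeff_combine:
  fixes D d :: "nat \<Rightarrow> complex" and r :: "nat \<Rightarrow> nat \<Rightarrow> complex" and u :: "nat \<Rightarrow> complex^'n"
  shows "(\<Sum>i<k. D i *s u i + d i *s (\<Sum>l<k. r i l *s u l)) =
         (\<Sum>l<k. (D l + (\<Sum>i<k. d i * r i l)) *s u l)"
proof (subst vec_eq_iff, rule allI)
  fix j
  have "(\<Sum>i<k. d i * (\<Sum>l<k. r i l * u l $ j)) = (\<Sum>i<k. \<Sum>l<k. d i * r i l * u l $ j)"
    by (simp add: sum_distrib_left mult.assoc)
  also have "\<dots> = (\<Sum>l<k. \<Sum>i<k. d i * r i l * u l $ j)" by (rule sum.swap)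
  also have "\<dots> = (\<Sum>l<k. (\<Sum>i<k. d i * r i l) * u l $ j)"
    by (simp add: sum_distrib_right)
  finally have e: "(\<Sum>i<k. d i * (\<Sum>l<k. r i l * u l $ j)) = (\<Sum>l<k. (\<Sum>i<k. d i * r i l) * u l $ j)" .
  show "(\<Sum>i<k. D i *s u i + d i *s (\<Sum>l<k. r i l *s u l)) $ j =
         (\<Sum>l<k. (D l + (\<Sum>i<k. d i * r i l)) *s u l) $ j"
    by (simp add: sum.distrib distrib_right e)
qed

lemma dense_point:
  fixes \<alpha> :: "complex \<Rightarrow> complex^'n"
  assumes B: "open B" and h\<alpha>: "vec_holomorphic B \<alpha>"
    and hE: "\<forall>t\<in>B. vec.subspace (E t) \<and> vec.dim (E t) = g"
    and hder: "\<forall>n\<le>g. \<forall>t\<in>B. (nablat^^n) \<alpha> t \<in> E t"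
    and W0: "open W0" "W0 \<subseteq> B" "W0 \<noteq> {}"
  shows "\<exists>t1\<in>W0. \<forall>n. (nablat^^n) \<alpha> t1 \<in> E t1"
proof -
  define a where "a = (\<lambda>n. (nablat^^n) \<alpha>)"
  have ha: "\<And>n. vec_holomorphic W0 (a n)"
    unfolding a_def vec_holomorphic_def
    using vec_holomorphic_funpow[OF h\<alpha> B] W0(2) unfolding vec_holomorphic_def
    by (blast intro: holomorphic_on_subset)
  define KS where "KS = {k. k \<le> g \<and> (\<exists>t\<in>W0. cindep k (\<lambda>i. a i t))}"
  have finKS: "finite KS" unfolding KS_def by auto
  have "0 \<in> KS" using W0(3) unfolding KS_def cindep_def by auto
  define k where "k = Max KS"
  have "k \<in> KS" unfolding k_def using finKS \<open>0 \<in> KS\<close> by (intro Max_in) auto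
  then obtain t1 where t1: "t1 \<in> W0" "cindep k (\<lambda>i. a i t1)" and kg: "k \<le> g"
    unfolding KS_def by auto
  have nodep: "\<not> cindep (Suc k) (\<lambda>i. a i t)" if t: "t \<in> W0" for t
  proof
    assume ci: "cindep (Suc k) (\<lambda>i. a i t)"
    show False
    proof (cases "Suc k \<le> g")
      case True
      then have "Suc k \<in> KS" unfolding KS_def using t ci by auto
      then have "Suc k \<le> k" unfolding k_def using Max_ge[OF finKS] by blast
      then show False by simp
    next
      case False
      have "\<forall>i<Suc k. a i t \<in> E t" using hder t W0(2) kg unfolding a_def by auto
      then have "Suc k \<le> vec.dim (E t)" using ci by (rule cindep_le_dim)
      then show False using hE t W0(2) kg False by auto
    qed
  qed
  obtain W' where W': "open W'" "t1 \<in> W'" "W' \<subseteq> W0"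
    and indW': "\<forall>t\<in>W'. cindep k (\<lambda>i. a i t)"
    and coW': "\<forall>x. vec_holomorphic W0 x \<longrightarrow> (\<forall>t\<in>W'. cspan k (\<lambda>i. a i t) (x t)) \<longrightarrow>
        (\<exists>c. (\<forall>i<k. c i holomorphic_on W') \<and> (\<forall>t\<in>W'. x t = (\<Sum>i<k. c i t *s a i t)))"
    using LI[where v=a and k=k and W=W0 and ?t1.0=t1] W0(1) t1 ha by blast
  have "\<forall>t\<in>W'. cspan k (\<lambda>i. a i t) (a k t)"
    using indW' nodep W'(3) cindep_Suc_dep by blast
  then obtain c where c: "\<forall>i<k. c i holomorphic_on W'"
    and ck: "\<forall>t\<in>W'. a k t = (\<Sum>i<k. c i t *s a i t)"
    using coW' ha by blast
  have haW': "\<And>n. vec_holomorphic W' (a n)"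
    using ha W'(3) unfolding vec_holomorphic_def by (blast intro: holomorphic_on_subset)
  have rep1: "\<forall>i. \<exists>d. i < k \<longrightarrow> (\<forall>l<k. d l holomorphic_on W') \<and>
      (\<forall>t\<in>W'. a (Suc i) t = (\<Sum>l<k. d l t *s a l t))"
  proof
    fix i
    show "\<exists>d. i < k \<longrightarrow> (\<forall>l<k. d l holomorphic_on W') \<and>
      (\<forall>t\<in>W'. a (Suc i) t = (\<Sum>l<k. d l t *s a l t))"
    proof (cases "Suc i < k")
      case True
      show ?thesis
      proof (rule exI[of _ "\<lambda>l t. if l = Suc i then 1 else 0"], intro impI conjI allI ballI)
        fix l show "(\<lambda>t. if l = Suc i then 1 else 0 :: complex) holomorphic_on W'"
          by (cases "l = Suc i") (simp_all add: holomorphic_on_const)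
      next
        fix t show "a (Suc i) t = (\<Sum>l<k. (if l = Suc i then 1 else 0) *s a l t)"
          by (rule sum_ind_vec[OF True, symmetric])
      qed
    next
      case False
      show ?thesis
      proof (rule exI[of _ c], intro impI)
        assume "i < k"
        then have "Suc i = k" using False by simp
        then show "(\<forall>l<k. c l holomorphic_on W') \<and> (\<forall>t\<in>W'. a (Suc i) t = (\<Sum>l<k. c l t *s a l t))"
          using c ck by simp
      qed
    qed
  qed
  obtain r where r: "\<forall>i. i < k \<longrightarrow> (\<forall>l<k. r i l holomorphic_on W') \<and>
      (\<forall>t\<in>W'. a (Suc i) t = (\<Sum>l<k. r i l t *s a l t))"
    using choice[OF rep1] by blast
  have main: "\<exists>d. (\<forall>l<k. d l holomorphic_on W') \<and> (\<forall>t\<in>W'. a n t = (\<Sum>l<k. d l t *s a l t))" for n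
  proof (induction n)
    case 0
    show ?case
    proof (cases "k = 0")
      case True
      show ?thesis by (rule exI[of _ c]) (use c ck True in auto)
    next
      case False
      show ?thesis
      proof (rule exI[of _ "\<lambda>l t. if l = 0 then 1 else 0"], intro impI conjI allI ballI)
        fix l show "(\<lambda>t. if l = 0 then 1 else 0 :: complex) holomorphic_on W'"
          by (cases "l = 0") (simp_all add: holomorphic_on_const)
      next
        fix t have "0 < k" using False by simp
        show "a 0 t = (\<Sum>l<k. (if l = 0 then 1 else 0) *s a l t)"
          by (rule sum_ind_vec[OF \<open>0 < k\<close>, symmetric])
      qed
    qed
  next
    case (Suc n)
    then obtain d where d: "\<forall>l<k. d l holomorphic_on W'"
      and dn: "\<forall>t\<in>W'. a n t = (\<Sum>l<k. d l t *s a l t)" by blast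
    define e where "e = (\<lambda>l t. deriv (d l) t + (\<Sum>i<k. d i t * r i l t))"
    show ?case
    proof (rule exI[of _ e], intro conjI allI impI ballI)
      fix l assume "l < k"
      then show "e l holomorphic_on W'" unfolding e_def
        using d r W'(1) by (auto intro!: holomorphic_intros)
    next
      fix t assume t: "t \<in> W'"
      have "a (Suc n) t = nablat (a n) t" by (simp add: a_def)
      also have "\<dots> = (\<Sum>i<k. deriv (d i) t *s a i t + d i t *s nablat (a i) t)"
        by (rule nablat_sum[OF W'(1) t]) (use d haW' dn in auto)
      also have "\<dots> = (\<Sum>i<k. deriv (d i) t *s a i t + d i t *s (\<Sum>l<k. r i l t *s a l t))"
      proof (rule sum.cong[OF refl])
        fix i assume "i \<in> {..<k}"
        then have "nablat (a i) t = (\<Sum>l<k. r i l t *s a l t)"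
          using r t by (simp add: a_def)
        then show "deriv (d i) t *s a i t + d i t *s nablat (a i) t =
            deriv (d i) t *s a i t + d i t *s (\<Sum>l<k. r i l t *s a l t)" by simp
      qed
      also have "\<dots> = (\<Sum>l<k. e l t *s a l t)"
        unfolding e_def by (rule coeff_combine)
      finally show "a (Suc n) t = (\<Sum>l<k. e l t *s a l t)" .
    qed
  qed
  have "\<forall>n. a n t1 \<in> E t1"
  proof
    fix n
    obtain d where "\<forall>t\<in>W'. a n t = (\<Sum>l<k. d l t *s a l t)" using main by blast
    then have f1: "cspan k (\<lambda>i. a i t1) (a n t1)" unfolding cspan_def using W'(2)
      by (intro exI[of _ "\<lambda>l. d l t1"]) blast
    have f2: "\<forall>i<k. a i t1 \<in> E t1" using hder t1(1) W0(2) kg unfolding a_def by auto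
    have f3: "vec.subspace (E t1)" using hE t1(1) W0(2) by blast
    show "a n t1 \<in> E t1" by (rule cspan_in_subspace[OF f3 f2 f1])
  qed
  then show ?thesis using t1(1) unfolding a_def by blast
qed



lemma deriv_funpow_lin:
  fixes \<alpha> :: "complex \<Rightarrow> complex^'n" and L :: "'n \<Rightarrow> complex"
  assumes B: "open B" and h\<alpha>: "vec_holomorphic B \<alpha>"
  shows "\<forall>t\<in>B. (deriv^^n) (\<lambda>t. \<Sum>i\<in>UNIV. L i * \<alpha> t $ i) t = (\<Sum>i\<in>UNIV. L i * (nablat^^n) \<alpha> t $ i)"
proof (induction n)
  case 0
  then show ?case by simp
next
  case (Suc n)
  show ?case
  proof
    fix t assume t: "t \<in> B"
    have ev: "eventually (\<lambda>s. s \<in> B) (nhds t)" using B t eventually_nhds_in_open by blast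
    have "(deriv^^Suc n) (\<lambda>t. \<Sum>i\<in>UNIV. L i * \<alpha> t $ i) t =
        deriv ((deriv^^n) (\<lambda>t. \<Sum>i\<in>UNIV. L i * \<alpha> t $ i)) t" by simp
    also have "\<dots> = deriv (\<lambda>s. \<Sum>i\<in>UNIV. L i * (nablat^^n) \<alpha> s $ i) t"
      by (rule deriv_cong_ev[OF eventually_mono[OF ev]]) (use Suc in auto)
    also have "\<dots> = (\<Sum>i\<in>UNIV. L i * deriv (\<lambda>s. (nablat^^n) \<alpha> s $ i) t)"
    proof (rule DERIV_imp_deriv)
      have hn: "vec_holomorphic B ((nablat^^n) \<alpha>)" by (rule vec_holomorphic_funpow[OF h\<alpha> B])
      show "((\<lambda>s. \<Sum>i\<in>UNIV. L i * (nablat ^^ n) \<alpha> s $ i) has_field_derivative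
          (\<Sum>i\<in>UNIV. L i * deriv (\<lambda>s. (nablat ^^ n) \<alpha> s $ i) t)) (at t)"
      proof (rule DERIV_sum)
        fix i
        have "(\<lambda>s. (nablat ^^ n) \<alpha> s $ i) holomorphic_on B" using hn unfolding vec_holomorphic_def by blast
        then have "((\<lambda>s. (nablat ^^ n) \<alpha> s $ i) has_field_derivative deriv (\<lambda>s. (nablat ^^ n) \<alpha> s $ i) t) (at t)"
          using holomorphic_derivI[OF _ B t] by blast
        then show "((\<lambda>s. L i * (nablat ^^ n) \<alpha> s $ i) has_field_derivative
            L i * deriv (\<lambda>s. (nablat ^^ n) \<alpha> s $ i) t) (at t)"
          by (rule DERIV_cmult)
      qed
    qed
    also have "\<dots> = (\<Sum>i\<in>UNIV. L i * (nablat^^Suc n) \<alpha> t $ i)"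
      by (simp add: nablat_def)
    finally show "(deriv^^Suc n) (\<lambda>t. \<Sum>i\<in>UNIV. L i * \<alpha> t $ i) t = (\<Sum>i\<in>UNIV. L i * (nablat^^Suc n) \<alpha> t $ i)" .
  qed
qed

lemma ident:
  fixes \<alpha> :: "complex \<Rightarrow> complex^'n"
  assumes B: "open B" "connected B" and h\<alpha>: "vec_holomorphic B \<alpha>" and t1: "t1 \<in> B"
    and S: "vec.subspace S" and hS: "\<forall>n. (nablat^^n) \<alpha> t1 \<in> S" and s: "s \<in> B"
  shows "\<alpha> s \<in> S"
proof (rule ccontr)
  assume ns: "\<alpha> s \<notin> S"
  obtain B0 where B0: "B0 \<subseteq> S" "vec.independent B0" "S \<subseteq> vec.span B0"
    using vec.basis_exists[of S] by metis
  have spanB0: "vec.span B0 = S" using B0 vec.span_minimal[OF B0(1) S] by blast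
  have nin: "\<alpha> s \<notin> B0" "\<alpha> s \<notin> vec.span B0" using ns B0(1) spanB0 by auto
  have indI: "vec.independent (insert (\<alpha> s) B0)"
    using B0(2) nin by (simp add: vec.independent_insert)
  define l where "l = vec.construct (insert (\<alpha> s) B0) (\<lambda>y. if y = \<alpha> s then \<alpha> s else 0)"
  have lin: "Vector_Spaces.linear (*s) (*s) l" unfolding l_def by (rule vec.linear_construct[OF indI])
  have l1: "l (\<alpha> s) = \<alpha> s" unfolding l_def by (simp add: vec.construct_basis[OF indI])
  have l0: "l y = 0" if y: "y \<in> S" for y
  proof -
    have "l y = (\<lambda>x. 0) y"
    proof (rule vec.linear_eq_on_span[OF lin _ _ ])
      show "Vector_Spaces.linear (*s) (*s) (\<lambda>x::complex^'n. 0::complex^'n)" by (rule vec.linear_zero)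
      show "y \<in> vec.span B0" using y spanB0 by simp
      fix x assume "x \<in> B0"
      then show "l x = 0" unfolding l_def using nin(1) by (auto simp: vec.construct_basis[OF indI])
    qed
    then show ?thesis by simp
  qed
  have "\<alpha> s \<noteq> 0" using ns vec.subspace_0[OF S] by auto
  then obtain j where j: "\<alpha> s $ j \<noteq> 0" by (auto simp: vec_eq_iff)
  define L where "L = (\<lambda>i. matrix l $ j $ i)"
  have lL: "l y $ j = (\<Sum>i\<in>UNIV. L i * y $ i)" for y
  proof -
    have "l y = matrix l *v y" using matrix_works[OF lin] by simp
    then show ?thesis by (simp add: L_def matrix_vector_mult_def)
  qed
  define h where "h = (\<lambda>t. \<Sum>i\<in>UNIV. L i * \<alpha> t $ i)"
  have hh: "h holomorphic_on B" unfolding h_def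
    using h\<alpha> unfolding vec_holomorphic_def by (auto intro!: holomorphic_intros)
  have "\<And>n. (deriv^^n) h t1 = 0"
  proof -
    fix n
    have "(deriv^^n) h t1 = (\<Sum>i\<in>UNIV. L i * (nablat^^n) \<alpha> t1 $ i)"
      using deriv_funpow_lin[OF B(1) h\<alpha>, of n L] t1 unfolding h_def by blast
    also have "\<dots> = l ((nablat^^n) \<alpha> t1) $ j" by (simp add: lL)
    also have "\<dots> = 0" using l0 hS by simp
    finally show "(deriv^^n) h t1 = 0" .
  qed
  then have "h s = 0" using holomorphic_fun_eq_0_on_connected[OF hh B(1) B(2) _ t1 s] by blast
  moreover have "h s = \<alpha> s $ j" unfolding h_def using lL[of "\<alpha> s"] l1 by simp
  ultimately show False using j by simp
qed

lemma closure_E: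
  fixes x :: "complex^'n"
  assumes hs: "holo_subbundle B g E" and t0: "t0 \<in> B"
    and dens: "\<forall>W. open W \<longrightarrow> t0 \<in> W \<longrightarrow> (\<exists>t\<in>W \<inter> B. x \<in> E t)"
  shows "x \<in> E t0"
proof (rule ccontr)
  assume nx: "x \<notin> E t0"
  have "\<exists>W e. open W \<and> t0 \<in> W \<and> W \<subseteq> B \<and> (\<forall>k<g. vec_holomorphic W (e k)) \<and>
                     (\<forall>t\<in>W. E t = vec.span {e k t | k. k < g})"
    using hs t0 unfolding holo_subbundle_def by blast
  then obtain W e where W: "open W" "t0 \<in> W" "W \<subseteq> B" and he: "\<forall>k<g. vec_holomorphic W (e k)"
    and sp0: "\<forall>t\<in>W. E t = vec.span {e k t | k. k < g}" by blast
  have setEq: "\<And>t. {e k t | k. k < g} = (\<lambda>k. e k t) ` {..<g}" by auto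
  have sp: "\<forall>t\<in>W. E t = vec.span ((\<lambda>k. e k t) ` {..<g})" using sp0 setEq by simp
  have "vec.dim (E t0) = g" using hs t0 unfolding holo_subbundle_def by blast
  then have "vec.dim (vec.span ((\<lambda>k. e k t0) ` {..<g})) = g" using sp W(2) by simp
  then have ci: "cindep g (\<lambda>k. e k t0)" by (rule cindep_from_dim)
  define v where "v = (\<lambda>i. if i = g then (\<lambda>t::complex. x) else e i)"
  have veq: "\<And>t i. i < g \<Longrightarrow> v i t = e i t" unfolding v_def by simp
  have vg: "\<And>t. v g t = x" unfolding v_def by simp
  have ci': "cindep g (\<lambda>i. v i t0)" using ci cindep_cong[of g "\<lambda>i. v i t0" "\<lambda>i. e i t0"] veq by simp
  have "\<not> cspan g (\<lambda>i. e i t0) x" using nx sp W(2) span_cspan[of x "\<lambda>i. e i t0" g] by simp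
  then have "\<not> cspan g (\<lambda>i. v i t0) (v g t0)" using cspan_cong[of g "\<lambda>i. v i t0" "\<lambda>i. e i t0"] veq vg by simp
  then have ciS: "cindep (Suc g) (\<lambda>i. v i t0)" by (rule cindep_SucI[OF ci'])
  have hv: "\<forall>i<Suc g. vec_holomorphic W (v i)"
  proof (intro allI impI)
    fix i assume "i < Suc g"
    show "vec_holomorphic W (v i)"
    proof (cases "i = g")
      case True then show ?thesis unfolding v_def vec_holomorphic_def by simp
    next
      case False then show ?thesis using he \<open>i < Suc g\<close> unfolding v_def by simp
    qed
  qed
  obtain W' where W': "open W'" "t0 \<in> W'" "W' \<subseteq> W" and indW': "\<forall>t\<in>W'. cindep (Suc g) (\<lambda>i. v i t)"
    using LI[where v=v and k="Suc g" and W=W and ?t1.0=t0] W(1,2) hv ciS by blast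
  obtain t where t: "t \<in> W' \<inter> B" "x \<in> E t" using dens W'(1,2) by blast
  have tW: "t \<in> W" using t W'(3) by blast
  have "cspan g (\<lambda>i. e i t) x" using t(2) sp tW span_cspan[of x "\<lambda>i. e i t" g] by simp
  then have "cspan g (\<lambda>i. v i t) (v g t)" using cspan_cong[of g "\<lambda>i. v i t" "\<lambda>i. e i t"] veq vg by simp
  moreover have "cindep (Suc g) (\<lambda>i. v i t)" using indW' t(1) by blast
  ultimately show False using cindep_cspan_False by blast
qed



lemma higgs_eq:
  assumes "vec.subspace (E t)" shows "higgs E \<beta> t = E t \<longleftrightarrow> nablat \<beta> t \<in> E t"
proof
  assume h: "higgs E \<beta> t = E t"
  have "nablat \<beta> t + 0 \<in> higgs E \<beta> t" unfolding higgs_def using vec.subspace_0[OF assms] by blast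
  then show "nablat \<beta> t \<in> E t" using h by simp
next
  assume n: "nablat \<beta> t \<in> E t"
  show "higgs E \<beta> t = E t"
  proof
    show "higgs E \<beta> t \<subseteq> E t" unfolding higgs_def using vec.subspace_add[OF assms n] by blast
    show "E t \<subseteq> higgs E \<beta> t"
    proof
      fix y assume y: "y \<in> E t"
      have "y - nablat \<beta> t \<in> E t" by (rule vec.subspace_diff[OF assms y n])
      moreover have "y = nablat \<beta> t + (y - nablat \<beta> t)" by simp
      ultimately show "y \<in> higgs E \<beta> t" unfolding higgs_def by blast
    qed
  qed
qed

lemma nablat_const_zero: "nablat (\<lambda>t. u) t = 0"
  by (simp add: nablat_def vec_eq_iff)

lemma GammaU_of:
  fixes \<alpha> :: "complex \<Rightarrow> complex^'n"
  assumes hE: "\<forall>t\<in>B. vec.subspace (E t)" and inU: "\<forall>s\<in>B. \<alpha> s \<in> unitary_flat B E"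
    and h\<alpha>: "vec_holomorphic B \<alpha>"
  shows "Gamma_U B E \<alpha>"
proof -
  let ?U = "unitary_flat B E"
  have sub: "vec.subspace ?U"
  proof (rule vec.subspaceI)
    show "0 \<in> ?U" unfolding unitary_flat_def using hE vec.subspace_0 by blast
    fix x y assume "x \<in> ?U" "y \<in> ?U"
    then show "x + y \<in> ?U" unfolding unitary_flat_def using hE vec.subspace_add by blast
  next
    fix c x assume "x \<in> ?U"
    then show "c *s x \<in> ?U" unfolding unitary_flat_def using hE vec.subspace_scale by blast
  qed
  obtain B0 where B0: "B0 \<subseteq> ?U" "vec.independent B0" "?U \<subseteq> vec.span B0"
    using vec.basis_exists[of ?U] by metis
  define P where "P = vec.construct B0 id"
  have lin: "Vector_Spaces.linear (*s) (*s) P" unfolding P_def by (rule vec.linear_construct[OF B0(2)])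
  have rng: "P y \<in> ?U" for y
  proof -
    have "P y \<in> range P" by simp
    also have "range P = vec.span (id ` B0)" unfolding P_def by (rule vec.range_construct_eq_span[OF B0(2)])
    also have "\<dots> \<subseteq> ?U" using vec.span_minimal[OF _ sub] B0(1) by simp
    finally show ?thesis .
  qed
  have fixU: "P y = y" if y: "y \<in> ?U" for y
  proof -
    have "P y = id y"
    proof (rule vec.linear_eq_on_span[OF lin vec.linear_id])
      show "y \<in> vec.span B0" using y B0(3) by blast
      fix x assume "x \<in> B0"
      then show "P x = id x" unfolding P_def by (rule vec.construct_basis[OF B0(2)])
    qed
    then show ?thesis by simp
  qed
  obtain h where h: "bij_betw h {0..<CARD('n)} (UNIV::'n set)"
    using ex_bij_betw_nat_finite[of "UNIV::'n set"] by auto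
  show ?thesis unfolding Gamma_U_def
  proof (intro exI[of _ "CARD('n)"] exI[of _ "\<lambda>i. P (axis (h i) 1)"] exI[of _ "\<lambda>i t. \<alpha> t $ h i"]
        conjI allI impI ballI)
    fix i :: nat
    show "P (axis (h i) 1) \<in> ?U" by (rule rng)
    show "(\<lambda>t. \<alpha> t $ h i) holomorphic_on B" using h\<alpha> unfolding vec_holomorphic_def by blast
  next
    fix t assume t: "t \<in> B"
    have "\<alpha> t = P (\<alpha> t)" using fixU inU t by simp
    also have "\<dots> = P (\<Sum>j\<in>UNIV. \<alpha> t $ j *s axis j 1)" by (simp add: basis_expansion)
    also have "\<dots> = (\<Sum>j\<in>UNIV. \<alpha> t $ j *s P (axis j 1))"
      by (simp add: vec.linear_sum[OF lin] vec.linear_scale[OF lin])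
    also have "\<dots> = (\<Sum>i\<in>{0..<CARD('n)}. \<alpha> t $ h i *s P (axis (h i) 1))"
      by (rule sum.reindex_bij_betw[OF h, symmetric])
    also have "\<dots> = (\<Sum>i<CARD('n). \<alpha> t $ h i *s P (axis (h i) 1))"
      by (simp add: lessThan_atLeast0)
    finally show "\<alpha> t = (\<Sum>i<CARD('n). \<alpha> t $ h i *s P (axis (h i) 1))" .
  qed
qed

lemma from_U:
  fixes \<alpha> :: "complex \<Rightarrow> complex^'n"
  assumes B: "open B" and hE: "\<forall>t\<in>B. vec.subspace (E t)" and GU: "Gamma_U B E \<alpha>"
  shows "Gamma_K B E ((nablat^^j) \<alpha>)"
proof -
  obtain k u f where uf: "\<forall>i<(k::nat). u i \<in> unitary_flat B E \<and> f i holomorphic_on B"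
    and eq: "\<forall>t\<in>B. \<alpha> t = (\<Sum>i<k. f i t *s u i)"
    using GU unfolding Gamma_U_def by blast
  have claim: "(\<forall>i<k. (deriv^^n) (f i) holomorphic_on B) \<and>
      (\<forall>t\<in>B. (nablat^^n) \<alpha> t = (\<Sum>i<k. (deriv^^n) (f i) t *s u i))" for n
  proof (induction n)
    case 0
    then show ?case using uf eq by simp
  next
    case (Suc n)
    have h1: "\<forall>i<k. (deriv^^Suc n) (f i) holomorphic_on B"
      using Suc B by (auto intro: holomorphic_deriv)
    have h2: "(nablat^^Suc n) \<alpha> t = (\<Sum>i<k. (deriv^^Suc n) (f i) t *s u i)" if t: "t \<in> B" for t
    proof -
      have "(nablat^^Suc n) \<alpha> t = nablat ((nablat^^n) \<alpha>) t" by simp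
      also have "\<dots> = (\<Sum>i<k. deriv ((deriv^^n) (f i)) t *s u i + (deriv^^n) (f i) t *s nablat (\<lambda>t. u i) t)"
        by (rule nablat_sum[OF B t, where v="\<lambda>i t. u i"]) (use Suc in \<open>auto simp: vec_holomorphic_def\<close>)
      also have "\<dots> = (\<Sum>i<k. (deriv^^Suc n) (f i) t *s u i)"
        by (simp add: nablat_const_zero)
      finally show ?thesis .
    qed
    show ?case using h1 h2 by blast
  qed
  have hj: "vec_holomorphic B ((nablat^^j) \<alpha>)" unfolding vec_holomorphic_def
  proof
    fix m
    have "(\<lambda>t. \<Sum>i<k. (deriv^^j) (f i) t * u i $ m) holomorphic_on B"
      using claim[of j] by (intro holomorphic_on_sum holomorphic_on_mult holomorphic_on_const) auto
    then show "(\<lambda>t. (nablat ^^ j) \<alpha> t $ m) holomorphic_on B"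
      by (rule holomorphic_transform) (use claim[of j] in simp)
  qed
  have inE: "(nablat^^n) \<alpha> t \<in> E t" if t: "t \<in> B" for n t
  proof -
    have "(nablat^^n) \<alpha> t = (\<Sum>i<k. (deriv^^n) (f i) t *s u i)" using claim t by blast
    also have "\<dots> \<in> E t"
    proof (rule vec.subspace_sum)
      show "vec.subspace (E t)" using hE t by blast
      fix i assume "i \<in> {..<k}"
      then have "u i \<in> E t" using uf t unfolding unitary_flat_def by blast
      then show "(deriv^^n) (f i) t *s u i \<in> E t" using vec.subspace_scale hE t by blast
    qed
    finally show ?thesis .
  qed
  show ?thesis unfolding Gamma_K_def hol_section_def
  proof (intro conjI ballI)
    show "vec_holomorphic B ((nablat ^^ j) \<alpha>)" by (rule hj)
    fix t assume t: "t \<in> B"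
    show "(nablat ^^ j) \<alpha> t \<in> E t" using inE t by blast
    have "nablat ((nablat ^^ j) \<alpha>) t \<in> E t" using inE[of t "Suc j"] t by simp
    then show "higgs E ((nablat ^^ j) \<alpha>) t = E t" using higgs_eq hE t by blast
  qed
qed

theorem theorem2:
  fixes B :: "complex set" and c :: complex and r :: real and g :: nat
    and Q :: "int^'n^'n" and E :: "complex \<Rightarrow> (complex^'n) set"
    and \<alpha> :: "complex \<Rightarrow> complex^'n"
  assumes "r > 0" and "B = ball c r"
    and "pvhs_wt1 B g Q E"
    and "hol_section B E \<alpha>"
  shows "Gamma_U B E \<alpha> \<longleftrightarrow> (\<forall>j<g. Gamma_K B E ((nablat ^^ j) \<alpha>))"
proof -
  have B: "open B" "connected B" using assms(2) by simp_all
  have hs: "holo_subbundle B g E" using assms(3) unfolding pvhs_wt1_def by blast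
  have hE: "\<forall>t\<in>B. vec.subspace (E t) \<and> vec.dim (E t) = g" using hs unfolding holo_subbundle_def by blast
  have hE': "\<forall>t\<in>B. vec.subspace (E t)" using hE by blast
  have h\<alpha>: "vec_holomorphic B \<alpha>" and \<alpha>E: "\<forall>t\<in>B. \<alpha> t \<in> E t"
    using assms(4) unfolding hol_section_def by blast+
  show ?thesis
  proof
    assume GU: "Gamma_U B E \<alpha>"
    show "\<forall>j<g. Gamma_K B E ((nablat ^^ j) \<alpha>)" using from_U[OF B(1) hE' GU] by blast
  next
    assume K: "\<forall>j<g. Gamma_K B E ((nablat ^^ j) \<alpha>)"
    have hder: "\<forall>n\<le>g. \<forall>t\<in>B. (nablat^^n) \<alpha> t \<in> E t"
    proof (intro allI impI ballI)
      fix n t assume n: "n \<le> g" and t: "t \<in> B"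
      show "(nablat^^n) \<alpha> t \<in> E t"
      proof (cases "n < g")
        case True
        then show ?thesis using K t unfolding Gamma_K_def hol_section_def by blast
      next
        case False
        then have ng: "n = g" using n by simp
        show ?thesis
        proof (cases g)
          case 0
          then show ?thesis using ng \<alpha>E t by simp
        next
          case (Suc g')
          then have "Gamma_K B E ((nablat ^^ g') \<alpha>)" using K by simp
          then have "higgs E ((nablat ^^ g') \<alpha>) t = E t" using t unfolding Gamma_K_def by blast
          then have "nablat ((nablat ^^ g') \<alpha>) t \<in> E t" using higgs_eq hE' t by blast
          then show ?thesis using ng Suc by simp
        qed
      qed
    qed
    have all: "\<alpha> s \<in> E t0" if s: "s \<in> B" and t0: "t0 \<in> B" for s t0
    proof (rule closure_E[OF hs t0], intro allI impI)
      fix W assume W: "open W" "t0 \<in> W"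
      have W0: "open (W \<inter> B)" "W \<inter> B \<subseteq> B" "W \<inter> B \<noteq> {}" using W t0 B(1) by auto
      obtain t1 where t1: "t1 \<in> W \<inter> B" and d: "\<forall>n. (nablat^^n) \<alpha> t1 \<in> E t1"
        using dense_point[OF B(1) h\<alpha> hE hder W0] by blast
      have "\<alpha> s \<in> E t1"
        by (rule ident[OF B h\<alpha> _ _ d s]) (use t1 hE' in auto)
      then show "\<exists>t\<in>W \<inter> B. \<alpha> s \<in> E t" using t1 by blast
    qed
    have "\<forall>s\<in>B. \<alpha> s \<in> unitary_flat B E" unfolding unitary_flat_def using all by blast
    then show "Gamma_U B E \<alpha>" by (rule GammaU_of[OF hE' _ h\<alpha>])
  qed
qed


end
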